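(* Let $\mathcal C$ be a category with binary coproducts and $H\colon\mathcal C\to\mathcal C$ a cia functor. Then for every object $Y$ of $\mathcal C$ the functor $H(-)+Y$ is also a cia functor.
   Context: An algebra $a\colon GA\to A$ for an endofunctor $G$ is corecursive if for every coalgebra $e\colon X\to GX$ there is a unique $s\colon X\to A$ with $s=a\cdot Gs\cdot e$; it is a cia if for every $e\colon X\to GX+A$ there is a unique $s\colon X\to A$ with $s=[a,\mathrm{id}_A]\cdot(Gs+\mathrm{id}_A)\cdot e$. An endofunctor is a cia functor if every corecursive algebra for it is a cia. *)

theory Defs
  imports Main
begin

text \<open>Categories given by a carrier of objects and a carrier of arrows,
with domain, codomain, identities and (diagrammatically reversed)
composition: Comp C g f is g after f.\<close>

record ('o, 'm) cat =
  Obj  :: "'o set"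
  Arr  :: "'m set"
  Dom  :: "'m \<Rightarrow> 'o"
  Cod  :: "'m \<Rightarrow> 'o"
  Ident :: "'o \<Rightarrow> 'm"
  Comp :: "'m \<Rightarrow> 'm \<Rightarrow> 'm"

definition hom :: "('o, 'm) cat \<Rightarrow> 'o \<Rightarrow> 'o \<Rightarrow> 'm set" where
  "hom C X Y = {f \<in> Arr C. Dom C f = X \<and> Cod C f = Y}"

definition category :: "('o, 'm) cat \<Rightarrow> bool" where
  "category C \<longleftrightarrow>
     (\<forall>f \<in> Arr C. Dom C f \<in> Obj C \<and> Cod C f \<in> Obj C) \<and>
     (\<forall>X \<in> Obj C. Ident C X \<in> hom C X X) \<and>
     (\<forall>X \<in> Obj C. \<forall>Y \<in> Obj C. \<forall>Z \<in> Obj C. \<forall>f \<in> hom C X Y. \<forall>g \<in> hom C Y Z.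
        Comp C g f \<in> hom C X Z) \<and>
     (\<forall>f \<in> Arr C. Comp C (Ident C (Cod C f)) f = f \<and> Comp C f (Ident C (Dom C f)) = f) \<and>
     (\<forall>f \<in> Arr C. \<forall>g \<in> Arr C. \<forall>h \<in> Arr C. Cod C f = Dom C g \<longrightarrow> Cod C g = Dom C h \<longrightarrow>
        Comp C h (Comp C g f) = Comp C (Comp C h g) f)"

record ('o, 'm) endofun =
  omap :: "'o \<Rightarrow> 'o"
  fmap :: "'m \<Rightarrow> 'm"

definition endofunctor :: "('o, 'm) cat \<Rightarrow> ('o, 'm) endofun \<Rightarrow> bool" where
  "endofunctor C F \<longleftrightarrow>
     (\<forall>X \<in> Obj C. omap F X \<in> Obj C) \<and>
     (\<forall>X \<in> Obj C. \<forall>Y \<in> Obj C. \<forall>f \<in> hom C X Y. fmap F f \<in> hom C (omap F X) (omap F Y)) \<and>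
     (\<forall>X \<in> Obj C. fmap F (Ident C X) = Ident C (omap F X)) \<and>
     (\<forall>f \<in> Arr C. \<forall>g \<in> Arr C. Cod C f = Dom C g \<longrightarrow>
        fmap F (Comp C g f) = Comp C (fmap F g) (fmap F f))"

record ('o, 'm) coprods =
  csum :: "'o \<Rightarrow> 'o \<Rightarrow> 'o"
  inl  :: "'o \<Rightarrow> 'o \<Rightarrow> 'm"
  inr  :: "'o \<Rightarrow> 'o \<Rightarrow> 'm"

definition binary_coproducts :: "('o, 'm) cat \<Rightarrow> ('o, 'm) coprods \<Rightarrow> bool" where
  "binary_coproducts C P \<longleftrightarrow>
     (\<forall>A \<in> Obj C. \<forall>B \<in> Obj C.
        csum P A B \<in> Obj C \<and>
        inl P A B \<in> hom C A (csum P A B) \<and>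
        inr P A B \<in> hom C B (csum P A B) \<and>
        (\<forall>Z \<in> Obj C. \<forall>f \<in> hom C A Z. \<forall>g \<in> hom C B Z.
           (\<exists>!h. h \<in> hom C (csum P A B) Z \<and> Comp C h (inl P A B) = f \<and> Comp C h (inr P A B) = g)))"

definition copair :: "('o, 'm) cat \<Rightarrow> ('o, 'm) coprods \<Rightarrow> 'm \<Rightarrow> 'm \<Rightarrow> 'm" where
  "copair C P f g = (THE h. h \<in> hom C (csum P (Dom C f) (Dom C g)) (Cod C f) \<and>
       Comp C h (inl P (Dom C f) (Dom C g)) = f \<and> Comp C h (inr P (Dom C f) (Dom C g)) = g)"

definition summ :: "('o, 'm) cat \<Rightarrow> ('o, 'm) coprods \<Rightarrow> 'm \<Rightarrow> 'm \<Rightarrow> 'm" where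
  "summ C P f g = copair C P (Comp C (inl P (Cod C f) (Cod C g)) f)
                             (Comp C (inr P (Cod C f) (Cod C g)) g)"

definition plus_const :: "('o, 'm) cat \<Rightarrow> ('o, 'm) coprods \<Rightarrow> ('o, 'm) endofun \<Rightarrow> 'o \<Rightarrow> ('o, 'm) endofun" where
  "plus_const C P H Y = \<lparr> omap = (\<lambda>X. csum P (omap H X) Y),
                          fmap = (\<lambda>f. summ C P (fmap H f) (Ident C Y)) \<rparr>"

definition corecursive :: "('o, 'm) cat \<Rightarrow> ('o, 'm) endofun \<Rightarrow> 'o \<Rightarrow> 'm \<Rightarrow> bool" where
  "corecursive C G A a \<longleftrightarrow> A \<in> Obj C \<and> a \<in> hom C (omap G A) A \<and>
     (\<forall>X \<in> Obj C. \<forall>e \<in> hom C X (omap G X).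
        \<exists>!s. s \<in> hom C X A \<and> s = Comp C a (Comp C (fmap G s) e))"

definition cia :: "('o, 'm) cat \<Rightarrow> ('o, 'm) coprods \<Rightarrow> ('o, 'm) endofun \<Rightarrow> 'o \<Rightarrow> 'm \<Rightarrow> bool" where
  "cia C P G A a \<longleftrightarrow> A \<in> Obj C \<and> a \<in> hom C (omap G A) A \<and>
     (\<forall>X \<in> Obj C. \<forall>e \<in> hom C X (csum P (omap G X) A).
        \<exists>!s. s \<in> hom C X A \<and>
          s = Comp C (copair C P a (Ident C A)) (Comp C (summ C P (fmap G s) (Ident C A)) e))"

definition cia_functor :: "('o, 'm) cat \<Rightarrow> ('o, 'm) coprods \<Rightarrow> ('o, 'm) endofun \<Rightarrow> bool" where
  "cia_functor C P G \<longleftrightarrow> (\<forall>A a. corecursive C G A a \<longrightarrow> cia C P G A a)"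

end

theory Submission
  imports Defs
begin

lemma ex1_transfer:
  assumes "\<And>s. s \<in> S \<Longrightarrow> (P s \<longleftrightarrow> Q s)" and "\<exists>!s. s \<in> S \<and> P s"
  shows "\<exists>!s. s \<in> S \<and> Q s"
  using assms by blast

locale cc =
  fixes C :: "('o, 'm) cat" and P :: "('o, 'm) coprods"
  assumes cat: "category C" and cop: "binary_coproducts C P"
begin

lemma hom_objs: "f \<in> hom C X Y \<Longrightarrow> X \<in> Obj C \<and> Y \<in> Obj C"
  using cat unfolding category_def hom_def by auto

lemma comp_hom: "f \<in> hom C X Y \<Longrightarrow> g \<in> hom C Y Z \<Longrightarrow> Comp C g f \<in> hom C X Z"
  using cat hom_objs[of f X Y] hom_objs[of g Y Z] unfolding category_def by blast

lemma id_hom: "X \<in> Obj C \<Longrightarrow> Ident C X \<in> hom C X X"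
  using cat unfolding category_def by blast

lemma id_l: "f \<in> hom C X Y \<Longrightarrow> Comp C (Ident C Y) f = f"
  using cat unfolding category_def hom_def by auto

lemma id_r: "f \<in> hom C X Y \<Longrightarrow> Comp C f (Ident C X) = f"
  using cat unfolding category_def hom_def by auto

lemma assoc: "f \<in> hom C X Y \<Longrightarrow> g \<in> hom C Y Z \<Longrightarrow> h \<in> hom C Z W \<Longrightarrow>
   Comp C h (Comp C g f) = Comp C (Comp C h g) f"
  using cat unfolding category_def hom_def by auto

lemma csum_obj: "A \<in> Obj C \<Longrightarrow> B \<in> Obj C \<Longrightarrow> csum P A B \<in> Obj C"
  using cop unfolding binary_coproducts_def by blast
lemma inl_hom: "A \<in> Obj C \<Longrightarrow> B \<in> Obj C \<Longrightarrow> inl P A B \<in> hom C A (csum P A B)"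
  using cop unfolding binary_coproducts_def by blast
lemma inr_hom: "A \<in> Obj C \<Longrightarrow> B \<in> Obj C \<Longrightarrow> inr P A B \<in> hom C B (csum P A B)"
  using cop unfolding binary_coproducts_def by blast

lemma copair:
  assumes f: "f \<in> hom C A Z" and g: "g \<in> hom C B Z"
  shows "copair C P f g \<in> hom C (csum P A B) Z \<and> Comp C (copair C P f g) (inl P A B) = f
     \<and> Comp C (copair C P f g) (inr P A B) = g"
proof -
  have o: "A \<in> Obj C" "B \<in> Obj C" "Z \<in> Obj C" using hom_objs f g by auto
  have d: "Dom C f = A" "Dom C g = B" "Cod C f = Z" using f g unfolding hom_def by auto
  have "\<exists>!h. h \<in> hom C (csum P A B) Z \<and> Comp C h (inl P A B) = f \<and> Comp C h (inr P A B) = g"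
    using cop o f g unfolding binary_coproducts_def by blast
  from theI'[OF this] show ?thesis unfolding copair_def d .
qed

lemma copair_unique:
  assumes "A \<in> Obj C" "B \<in> Obj C" and h: "h \<in> hom C (csum P A B) Z"
  shows "h = copair C P (Comp C h (inl P A B)) (Comp C h (inr P A B))"
proof -
  have Z: "Z \<in> Obj C" using hom_objs h by auto
  have f: "Comp C h (inl P A B) \<in> hom C A Z" using comp_hom inl_hom assms by blast
  have g: "Comp C h (inr P A B) \<in> hom C B Z" using comp_hom inr_hom assms by blast
  have u: "\<exists>!k. k \<in> hom C (csum P A B) Z \<and> Comp C k (inl P A B) = Comp C h (inl P A B) \<and> Comp C k (inr P A B) = Comp C h (inr P A B)"
    using cop assms Z f g unfolding binary_coproducts_def by blast
  show ?thesis using u copair[OF f g] h by blast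
qed

lemma comp_copair:
  assumes f: "f \<in> hom C A Z" and g: "g \<in> hom C B Z" and k: "k \<in> hom C Z W"
  shows "Comp C k (copair C P f g) = copair C P (Comp C k f) (Comp C k g)"
proof -
  have o: "A \<in> Obj C" "B \<in> Obj C" using hom_objs f g by auto
  note cp = copair[OF f g]
  have h: "Comp C k (copair C P f g) \<in> hom C (csum P A B) W" using comp_hom cp k by blast
  have "Comp C (Comp C k (copair C P f g)) (inl P A B) = Comp C k f"
    using assoc[OF inl_hom[OF o] _ k, of "copair C P f g"] cp by simp
  moreover have "Comp C (Comp C k (copair C P f g)) (inr P A B) = Comp C k g"
    using assoc[OF inr_hom[OF o] _ k, of "copair C P f g"] cp by simp
  ultimately show ?thesis using copair_unique[OF o h] by simp
qed

lemma summ: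
  assumes u: "u \<in> hom C A A'" and v: "v \<in> hom C B B'"
  shows "summ C P u v = copair C P (Comp C (inl P A' B') u) (Comp C (inr P A' B') v)"
  using u v unfolding summ_def hom_def by auto

lemma summ_props:
  assumes u: "u \<in> hom C A A'" and v: "v \<in> hom C B B'"
  shows "summ C P u v \<in> hom C (csum P A B) (csum P A' B') \<and>
    Comp C (summ C P u v) (inl P A B) = Comp C (inl P A' B') u \<and>
    Comp C (summ C P u v) (inr P A B) = Comp C (inr P A' B') v"
proof -
  have o: "A' \<in> Obj C" "B' \<in> Obj C" using hom_objs u v by auto
  have a: "Comp C (inl P A' B') u \<in> hom C A (csum P A' B')" using comp_hom u inl_hom[OF o] by blast
  have b: "Comp C (inr P A' B') v \<in> hom C B (csum P A' B')" using comp_hom v inr_hom[OF o] by blast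
  show ?thesis using copair[OF a b] summ[OF u v] by simp
qed

lemma copair_summ:
  assumes f: "f \<in> hom C A' Z" and g: "g \<in> hom C B' Z" and u: "u \<in> hom C A A'" and v: "v \<in> hom C B B'"
  shows "Comp C (copair C P f g) (summ C P u v) = copair C P (Comp C f u) (Comp C g v)"
proof -
  have o: "A' \<in> Obj C" "B' \<in> Obj C" using hom_objs u v by auto
  have a: "Comp C (inl P A' B') u \<in> hom C A (csum P A' B')" using comp_hom u inl_hom[OF o] by blast
  have b: "Comp C (inr P A' B') v \<in> hom C B (csum P A' B')" using comp_hom v inr_hom[OF o] by blast
  note cp = copair[OF f g]
  have "Comp C (copair C P f g) (summ C P u v) =
     copair C P (Comp C (copair C P f g) (Comp C (inl P A' B') u)) (Comp C (copair C P f g) (Comp C (inr P A' B') v))"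
    using summ[OF u v] comp_copair[OF a b, of "copair C P f g" Z] cp by simp
  also have "\<dots> = copair C P (Comp C f u) (Comp C g v)"
    using assoc[OF u inl_hom[OF o], of "copair C P f g" Z] assoc[OF v inr_hom[OF o], of "copair C P f g" Z] cp by simp
  finally show ?thesis .
qed

end

theorem mainTheorem5:
  fixes C :: "('o, 'm) cat" and P :: "('o, 'm) coprods" and H :: "('o, 'm) endofun"
  assumes "category C"
    and "binary_coproducts C P"
    and "endofunctor C H"
    and "cia_functor C P H"
    and "Y \<in> Obj C"
  shows "cia_functor C P (plus_const C P H Y)"
proof -
  interpret cc C P using assms(1,2) by unfold_locales
  have Hobj: "\<And>X. X \<in> Obj C \<Longrightarrow> omap H X \<in> Obj C" using assms(3) unfolding endofunctor_def by blast
  have Hhom: "\<And>X Z f. X \<in> Obj C \<Longrightarrow> Z \<in> Obj C \<Longrightarrow> f \<in> hom C X Z \<Longrightarrow> fmap H f \<in> hom C (omap H X) (omap H Z)"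
    using assms(3) unfolding endofunctor_def by blast
  have Yo: "Y \<in> Obj C" by fact
  let ?G = "plus_const C P H Y"
  have Go: "\<And>X. omap ?G X = csum P (omap H X) Y" and Gf: "\<And>f. fmap ?G f = summ C P (fmap H f) (Ident C Y)"
    by (simp_all add: plus_const_def)
  show ?thesis unfolding cia_functor_def
  proof (intro allI impI)
    fix A a assume cr: "corecursive C ?G A a"
    have Ao: "A \<in> Obj C" and ahom: "a \<in> hom C (csum P (omap H A) Y) A"
      using cr unfolding corecursive_def Go by auto
    have HAo: "omap H A \<in> Obj C" using Hobj Ao by blast
    define a0 where "a0 = Comp C a (inl P (omap H A) Y)"
    define y where "y = Comp C a (inr P (omap H A) Y)"
    have a0h: "a0 \<in> hom C (omap H A) A" unfolding a0_def using comp_hom inl_hom[OF HAo Yo] ahom by blast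
    have yh: "y \<in> hom C Y A" unfolding y_def using comp_hom inr_hom[OF HAo Yo] ahom by blast
    have a_eq: "a = copair C P a0 y" unfolding a0_def y_def using copair_unique[OF HAo Yo ahom] .
    have idY: "Ident C Y \<in> hom C Y Y" using id_hom Yo by blast
    have idA: "Ident C A \<in> hom C A A" using id_hom Ao by blast
    have cr0: "corecursive C H A a0"
      unfolding corecursive_def
    proof (intro conjI Ao a0h ballI)
      fix X e assume Xo: "X \<in> Obj C" and e: "e \<in> hom C X (omap H X)"
      have HXo: "omap H X \<in> Obj C" using Hobj Xo by blast
      have e': "Comp C (inl P (omap H X) Y) e \<in> hom C X (omap ?G X)"
        unfolding Go using comp_hom e inl_hom[OF HXo Yo] by blast
      have ex: "\<exists>!s. s \<in> hom C X A \<and> s = Comp C a (Comp C (fmap ?G s) (Comp C (inl P (omap H X) Y) e))"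
        using cr Xo e' unfolding corecursive_def by blast
      show "\<exists>!s. s \<in> hom C X A \<and> s = Comp C a0 (Comp C (fmap H s) e)"
      proof (rule ex1_transfer[OF _ ex])
        fix s assume s: "s \<in> hom C X A"
        have Hs: "fmap H s \<in> hom C (omap H X) (omap H A)" using Hhom Xo Ao s by blast
        note sp = summ_props[OF Hs idY]
        have "Comp C (fmap ?G s) (Comp C (inl P (omap H X) Y) e) = Comp C (Comp C (inl P (omap H A) Y) (fmap H s)) e"
          unfolding Gf using assoc[OF e inl_hom[OF HXo Yo], of "summ C P (fmap H s) (Ident C Y)" "csum P (omap H A) Y"] sp by simp
        also have "\<dots> = Comp C (inl P (omap H A) Y) (Comp C (fmap H s) e)"
          using assoc[OF e Hs inl_hom[OF HAo Yo]] by simp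
        finally have "Comp C a (Comp C (fmap ?G s) (Comp C (inl P (omap H X) Y) e)) = Comp C a0 (Comp C (fmap H s) e)"
          unfolding a0_def using assoc[OF comp_hom[OF e Hs] inl_hom[OF HAo Yo] ahom] by simp
        then show "(s = Comp C a (Comp C (fmap ?G s) (Comp C (inl P (omap H X) Y) e))) = (s = Comp C a0 (Comp C (fmap H s) e))"
          by simp
      qed
    qed
    have cia0: "cia C P H A a0" using assms(4) cr0 unfolding cia_functor_def by blast
    show "cia C P ?G A a"
      unfolding cia_def
    proof (intro conjI Ao ballI)
      show "a \<in> hom C (omap ?G A) A" using ahom Go by simp
    next
      fix X e assume Xo: "X \<in> Obj C" and e: "e \<in> hom C X (csum P (omap ?G X) A)"
      have HXo: "omap H X \<in> Obj C" using Hobj Xo by blast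
      have e2: "e \<in> hom C X (csum P (csum P (omap H X) Y) A)" using e Go by simp
      let ?l = "inl P (omap H X) A" and ?r = "inr P (omap H X) A"
      have lh: "?l \<in> hom C (omap H X) (csum P (omap H X) A)" using inl_hom HXo Ao by blast
      have rh: "?r \<in> hom C A (csum P (omap H X) A)" using inr_hom HXo Ao by blast
      have ry: "Comp C ?r y \<in> hom C Y (csum P (omap H X) A)" using comp_hom yh rh by blast
      define r1 where "r1 = copair C P ?l (Comp C ?r y)"
      have r1h: "r1 \<in> hom C (csum P (omap H X) Y) (csum P (omap H X) A)" using copair[OF lh ry] r1_def by simp
      define r where "r = copair C P r1 ?r"
      have rhom: "r \<in> hom C (csum P (csum P (omap H X) Y) A) (csum P (omap H X) A)"
        using copair[OF r1h rh] r_def by simp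
      have re: "Comp C r e \<in> hom C X (csum P (omap H X) A)" using comp_hom e2 rhom by blast
      have ex: "\<exists>!s. s \<in> hom C X A \<and>
          s = Comp C (copair C P a0 (Ident C A)) (Comp C (summ C P (fmap H s) (Ident C A)) (Comp C r e))"
        using cia0 Xo re unfolding cia_def by blast
      show "\<exists>!s. s \<in> hom C X A \<and>
          s = Comp C (copair C P a (Ident C A)) (Comp C (summ C P (fmap ?G s) (Ident C A)) e)"
      proof (rule ex1_transfer[OF _ ex])
        fix s assume s: "s \<in> hom C X A"
        have Hs: "fmap H s \<in> hom C (omap H X) (omap H A)" using Hhom Xo Ao s by blast
        have a0Hs: "Comp C a0 (fmap H s) \<in> hom C (omap H X) A" using comp_hom Hs a0h by blast
        define K where "K = copair C P (copair C P (Comp C a0 (fmap H s)) y) (Ident C A)"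
        have sH: "summ C P (fmap H s) (Ident C Y) \<in> hom C (csum P (omap H X) Y) (csum P (omap H A) Y)"
          using summ_props[OF Hs idY] by blast
        have ca: "copair C P a (Ident C A) \<in> hom C (csum P (csum P (omap H A) Y) A) A"
          using copair[OF ahom idA] by blast
        have ss: "summ C P (summ C P (fmap H s) (Ident C Y)) (Ident C A) \<in>
            hom C (csum P (csum P (omap H X) Y) A) (csum P (csum P (omap H A) Y) A)"
          using summ_props[OF sH idA] by blast
        have K1: "Comp C (copair C P a (Ident C A)) (summ C P (summ C P (fmap H s) (Ident C Y)) (Ident C A)) = K"
        proof -
          have "Comp C (copair C P a (Ident C A)) (summ C P (summ C P (fmap H s) (Ident C Y)) (Ident C A))
              = copair C P (Comp C a (summ C P (fmap H s) (Ident C Y))) (Comp C (Ident C A) (Ident C A))"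
            using copair_summ[OF ahom idA sH idA] .
          also have "Comp C a (summ C P (fmap H s) (Ident C Y)) = copair C P (Comp C a0 (fmap H s)) y"
            using copair_summ[OF a0h yh Hs idY] a_eq id_r[OF yh] by simp
          finally show ?thesis unfolding K_def using id_l[OF idA] by simp
        qed
        have ca0: "copair C P a0 (Ident C A) \<in> hom C (csum P (omap H A) A) A" using copair[OF a0h idA] by blast
        have sA: "summ C P (fmap H s) (Ident C A) \<in> hom C (csum P (omap H X) A) (csum P (omap H A) A)"
          using summ_props[OF Hs idA] by blast
        have M: "Comp C (copair C P a0 (Ident C A)) (summ C P (fmap H s) (Ident C A)) = copair C P (Comp C a0 (fmap H s)) (Ident C A)"
          using copair_summ[OF a0h idA Hs idA] id_l[OF idA] by simp
        have Mh: "copair C P (Comp C a0 (fmap H s)) (Ident C A) \<in> hom C (csum P (omap H X) A) A"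
          using copair[OF a0Hs idA] by blast
        note cpM = copair[OF a0Hs idA]
        have K2: "Comp C (copair C P (Comp C a0 (fmap H s)) (Ident C A)) r = K"
        proof -
          have "Comp C (copair C P (Comp C a0 (fmap H s)) (Ident C A)) r1 = copair C P (Comp C a0 (fmap H s)) y"
            unfolding r1_def using comp_copair[OF lh ry Mh] cpM assoc[OF yh rh Mh] id_l[OF yh] by simp
          then show ?thesis unfolding r_def K_def using comp_copair[OF r1h rh Mh] cpM by simp
        qed
        have L: "Comp C (copair C P a (Ident C A)) (Comp C (summ C P (fmap ?G s) (Ident C A)) e) = Comp C K e"
          unfolding Gf using assoc[OF e2 ss ca] K1 by simp
        have R: "Comp C (copair C P a0 (Ident C A)) (Comp C (summ C P (fmap H s) (Ident C A)) (Comp C r e)) = Comp C K e"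
        proof -
          have "Comp C (copair C P a0 (Ident C A)) (Comp C (summ C P (fmap H s) (Ident C A)) (Comp C r e))
              = Comp C (copair C P (Comp C a0 (fmap H s)) (Ident C A)) (Comp C r e)"
            using assoc[OF re sA ca0] M by simp
          also have "\<dots> = Comp C K e" using assoc[OF e2 rhom Mh] K2 by simp
          finally show ?thesis .
        qed
        show "(s = Comp C (copair C P a0 (Ident C A)) (Comp C (summ C P (fmap H s) (Ident C A)) (Comp C r e))) =
              (s = Comp C (copair C P a (Ident C A)) (Comp C (summ C P (fmap ?G s) (Ident C A)) e))"
          using L R by simp
      qed
    qed
  qed
qed

end
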